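(* Suppose $X_1,X_2\in\mathcal L^2$ have the same distribution. Then $(X_1,X_2)\in\mathrm{IC}_0$ if and only if its random rearrangement $(X_{\pi_1},X_{\pi_2})$ is independent.
   Context: $\mathcal L^2$ is the set of non-degenerate real random variables with finite variance. $(X,Y)\in\mathrm{IC}_0$ means $\mathrm{Corr}(g(X),g(Y))=0=\mathrm{Corr}(X,Y)$ for every measurable $g$ with $g(X),g(Y)\in\mathcal L^2$. Let $(\pi_1,\pi_2)$ be uniformly distributed on $\{(1,2),(2,1)\}$ and independent of $(X_1,X_2)$; the random rearrangement of $(X_1,X_2)$ is $(X_{\pi_1},X_{\pi_2})$, whose law is the equal mixture of the laws of $(X_1,X_2)$ and $(X_2,X_1)$. *)

theory Defs
  imports "HOL-Probability.Probability"
begin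

definition in_L2 :: "'a measure \<Rightarrow> ('a \<Rightarrow> real) \<Rightarrow> bool" where
  "in_L2 M Z \<longleftrightarrow> Z \<in> borel_measurable M \<and> integrable M (\<lambda>\<omega>. (Z \<omega>)\<^sup>2)
     \<and> \<not> (\<exists>c. AE \<omega> in M. Z \<omega> = c)"

definition covar :: "'a measure \<Rightarrow> ('a \<Rightarrow> real) \<Rightarrow> ('a \<Rightarrow> real) \<Rightarrow> real" where
  "covar M X Y = (\<integral>\<omega>. (X \<omega> - (\<integral>\<eta>. X \<eta> \<partial>M)) * (Y \<omega> - (\<integral>\<eta>. Y \<eta> \<partial>M)) \<partial>M)"

definition corr :: "'a measure \<Rightarrow> ('a \<Rightarrow> real) \<Rightarrow> ('a \<Rightarrow> real) \<Rightarrow> real" where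
  "corr M X Y = covar M X Y / (sqrt (covar M X X) * sqrt (covar M Y Y))"

definition IC0 :: "'a measure \<Rightarrow> ('a \<Rightarrow> real) \<Rightarrow> ('a \<Rightarrow> real) \<Rightarrow> bool" where
  "IC0 M X Y \<longleftrightarrow> corr M X Y = 0 \<and>
     (\<forall>g :: real \<Rightarrow> real. g \<in> borel_measurable borel \<longrightarrow>
        in_L2 M (g \<circ> X) \<longrightarrow> in_L2 M (g \<circ> Y) \<longrightarrow> corr M (g \<circ> X) (g \<circ> Y) = 0)"

text \<open>Law of the random rearrangement: the equal mixture of the laws of (X1,X2) and (X2,X1).\<close>
definition rearr_law :: "'a measure \<Rightarrow> ('a \<Rightarrow> real) \<Rightarrow> ('a \<Rightarrow> real) \<Rightarrow> (real \<times> real) measure" where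
  "rearr_law M X1 X2 = measure_of (space (borel \<Otimes>\<^sub>M borel)) (sets (borel \<Otimes>\<^sub>M borel))
     (\<lambda>A. (emeasure (distr M (borel \<Otimes>\<^sub>M borel) (\<lambda>\<omega>. (X1 \<omega>, X2 \<omega>))) A
          + emeasure (distr M (borel \<Otimes>\<^sub>M borel) (\<lambda>\<omega>. (X2 \<omega>, X1 \<omega>))) A) / 2)"

end

theory Submission
  imports Defs
begin



lemma rearr_law_facts:
  assumes X1: "X1 \<in> borel_measurable M" and X2: "X2 \<in> borel_measurable M"
  defines "\<nu> \<equiv> distr M (borel \<Otimes>\<^sub>M borel) (\<lambda>\<omega>. (X1 \<omega>, X2 \<omega>))"
  defines "\<nu>' \<equiv> distr M (borel \<Otimes>\<^sub>M borel) (\<lambda>\<omega>. (X2 \<omega>, X1 \<omega>))"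
  shows "sets (rearr_law M X1 X2) = sets (borel \<Otimes>\<^sub>M borel)"
    and "space (rearr_law M X1 X2) = space (borel \<Otimes>\<^sub>M borel)"
    and "\<And>A::(real \<times> real) set. A \<in> sets (borel \<Otimes>\<^sub>M borel) \<Longrightarrow>
       emeasure (rearr_law M X1 X2) A = (emeasure \<nu> A + emeasure \<nu>' A) / 2"
proof -
  show "sets (rearr_law M X1 X2) = sets (borel \<Otimes>\<^sub>M borel)"
    unfolding rearr_law_def by (simp add: sets.sigma_sets_eq)
  show "space (rearr_law M X1 X2) = space (borel \<Otimes>\<^sub>M borel)"
    unfolding rearr_law_def by simp
  fix A :: "(real \<times> real) set" assume A: "A \<in> sets (borel \<Otimes>\<^sub>M borel)"
  have ms: "measure_space (space (borel \<Otimes>\<^sub>M borel)) (sets (borel \<Otimes>\<^sub>M borel)) (\<lambda>A. (emeasure \<nu> A + emeasure \<nu>' A) / 2)"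
  proof -
    have "countably_additive (sets (borel \<Otimes>\<^sub>M borel)) (\<lambda>A. (emeasure \<nu> A + emeasure \<nu>' A) / 2)"
    proof (rule countably_additiveI)
      fix F :: "nat \<Rightarrow> (real \<times> real) set" assume F: "range F \<subseteq> sets (borel \<Otimes>\<^sub>M borel)" "disjoint_family F"
        "\<Union> (range F) \<in> sets (borel \<Otimes>\<^sub>M borel)"
      have s1: "(\<Sum>i. emeasure \<nu> (F i)) = emeasure \<nu> (\<Union> (range F))"
        using F by (intro suminf_emeasure) (auto simp: \<nu>_def)
      have s2: "(\<Sum>i. emeasure \<nu>' (F i)) = emeasure \<nu>' (\<Union> (range F))"
        using F by (intro suminf_emeasure) (auto simp: \<nu>'_def)
      have "(\<Sum>i. (emeasure \<nu> (F i) + emeasure \<nu>' (F i)) / 2)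
          = (\<Sum>i. (emeasure \<nu> (F i) + emeasure \<nu>' (F i))) / 2"
        by (simp add: divide_ennreal_def ennreal_suminf_multc)
      also have "\<dots> = (emeasure \<nu> (\<Union> (range F)) + emeasure \<nu>' (\<Union> (range F))) / 2"
        by (simp add: suminf_add[symmetric] s1 s2)
      finally show "(\<Sum>i. (emeasure \<nu> (F i) + emeasure \<nu>' (F i)) / 2) =
          (emeasure \<nu> (\<Union> (range F)) + emeasure \<nu>' (\<Union> (range F))) / 2" .
    qed
    then show ?thesis
      unfolding measure_space_def by (auto simp: positive_def sets.sigma_algebra_axioms)
  qed
  show "emeasure (rearr_law M X1 X2) A = (emeasure \<nu> A + emeasure \<nu>' A) / 2"
    unfolding rearr_law_def \<nu>_def[symmetric] \<nu>'_def[symmetric]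
    using ms A by (intro emeasure_measure_of_sigma) (auto simp: measure_space_def)
qed



lemma two_half_ennreal: "2 * ((x::ennreal) / 2) = x"
proof -
  have "2 * (x / 2) = x * (2 / 2)" by (metis mult.commute ennreal_divide_times)
  also have "(2::ennreal) / 2 = 1" by (rule ennreal_divide_self) auto
  finally show ?thesis by simp
qed

lemma meas_sets_eq: "sets K = sets N \<Longrightarrow> f \<in> measurable N L \<Longrightarrow> f \<in> measurable K L"
  using measurable_cong_sets[of K N L L] by simp

lemma nn_transfer:
  assumes s1: "sets N1 = sets N" and s2: "sets N2 = sets N" and sR: "sets R = sets N"
    and em: "\<And>A. A \<in> sets N \<Longrightarrow> emeasure R A = (emeasure N1 A + emeasure N2 A) / 2"
    and f: "f \<in> borel_measurable N"
  shows "2 * (\<integral>\<^sup>+x. f x \<partial>R) = (\<integral>\<^sup>+x. f x \<partial>N1) + (\<integral>\<^sup>+x. f x \<partial>N2)"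
  using f
proof (induction rule: borel_measurable_induct)
  case (cong f g)
  have sp: "space R = space N" "space N1 = space N" "space N2 = space N"
    using s1 s2 sR by (metis sets_eq_imp_space_eq)+
  have "(\<integral>\<^sup>+x. f x \<partial>R) = (\<integral>\<^sup>+x. g x \<partial>R)" "(\<integral>\<^sup>+x. f x \<partial>N1) = (\<integral>\<^sup>+x. g x \<partial>N1)"
     "(\<integral>\<^sup>+x. f x \<partial>N2) = (\<integral>\<^sup>+x. g x \<partial>N2)"
    using cong(3) sp by (auto intro!: nn_integral_cong)
  then show ?case using cong(4) by simp
next
  case (set A)
  then have "2 * emeasure R A = emeasure N1 A + emeasure N2 A"
    using em[OF set] by (simp add: two_half_ennreal)
  then show ?case using set s1 s2 sR by simp
next
  case (mult u c)
  have mR: "u \<in> borel_measurable R" "u \<in> borel_measurable N1" "u \<in> borel_measurable N2"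
    using mult(2) meas_sets_eq[OF sR] meas_sets_eq[OF s1] meas_sets_eq[OF s2] by blast+
  have "2 * (\<integral>\<^sup>+x. c * u x \<partial>R) = 2 * (c * (\<integral>\<^sup>+x. u x \<partial>R))"
    using nn_integral_cmult[OF mR(1)] by metis
  also have "\<dots> = c * (2 * (\<integral>\<^sup>+x. u x \<partial>R))"
    by (rule mult.left_commute)
  also have "\<dots> = c * (\<integral>\<^sup>+x. u x \<partial>N1) + c * (\<integral>\<^sup>+x. u x \<partial>N2)"
    unfolding mult(4) by (rule distrib_left)
  also have "\<dots> = (\<integral>\<^sup>+x. c * u x \<partial>N1) + (\<integral>\<^sup>+x. c * u x \<partial>N2)"
    using nn_integral_cmult[OF mR(2)] nn_integral_cmult[OF mR(3)] by metis
  finally show ?case .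
next
  case (add u v)
  have mR: "u \<in> borel_measurable R" "u \<in> borel_measurable N1" "u \<in> borel_measurable N2"
    "v \<in> borel_measurable R" "v \<in> borel_measurable N1" "v \<in> borel_measurable N2"
    using add meas_sets_eq[OF sR] meas_sets_eq[OF s1] meas_sets_eq[OF s2] by blast+
  have "2 * (\<integral>\<^sup>+x. v x + u x \<partial>R) = 2 * (\<integral>\<^sup>+x. v x \<partial>R) + 2 * (\<integral>\<^sup>+x. u x \<partial>R)"
    using mR by (simp add: nn_integral_add distrib_left)
  also have "\<dots> = ((\<integral>\<^sup>+x. v x \<partial>N1) + (\<integral>\<^sup>+x. v x \<partial>N2)) + ((\<integral>\<^sup>+x. u x \<partial>N1) + (\<integral>\<^sup>+x. u x \<partial>N2))"
    using add by simp
  also have "\<dots> = ((\<integral>\<^sup>+x. v x \<partial>N1) + (\<integral>\<^sup>+x. u x \<partial>N1)) + ((\<integral>\<^sup>+x. v x \<partial>N2) + (\<integral>\<^sup>+x. u x \<partial>N2))"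
    by (metis add.assoc add.commute)
  also have "\<dots> = (\<integral>\<^sup>+x. v x + u x \<partial>N1) + (\<integral>\<^sup>+x. v x + u x \<partial>N2)"
    using mR by (simp add: nn_integral_add)
  finally show ?case .
next
  case (seq U)
  have mR: "\<And>i. U i \<in> borel_measurable R" "\<And>i. U i \<in> borel_measurable N1" "\<And>i. U i \<in> borel_measurable N2"
    using seq(1) meas_sets_eq[OF sR] meas_sets_eq[OF s1] meas_sets_eq[OF s2] by blast+
  have eq: "(\<integral>\<^sup>+x. (SUP i. U i) x \<partial>K) = (SUP i. \<integral>\<^sup>+x. U i x \<partial>K)"
    if "\<And>i. U i \<in> borel_measurable K" for K :: "'a measure"
  proof -
    have "(\<integral>\<^sup>+x. (SUP i. U i) x \<partial>K) = (\<integral>\<^sup>+x. (SUP i. U i x) \<partial>K)"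
      unfolding SUP_apply ..
    also have "\<dots> = (SUP i. \<integral>\<^sup>+x. U i x \<partial>K)"
      using seq that by (intro nn_integral_monotone_convergence_SUP) auto
    finally show ?thesis .
  qed
  have inc: "incseq (\<lambda>i. \<integral>\<^sup>+x. U i x \<partial>K)" for K :: "'a measure"
    using seq unfolding incseq_def le_fun_def by (auto intro!: nn_integral_mono)
  have "2 * (SUP i. \<integral>\<^sup>+x. U i x \<partial>R) = (SUP i. 2 * \<integral>\<^sup>+x. U i x \<partial>R)"
    by (rule SUP_mult_left_ennreal)
  also have "\<dots> = (SUP i. (\<integral>\<^sup>+x. U i x \<partial>N1) + (\<integral>\<^sup>+x. U i x \<partial>N2))"
    using seq by presburger
  also have "\<dots> = (SUP i. \<integral>\<^sup>+x. U i x \<partial>N1) + (SUP i. \<integral>\<^sup>+x. U i x \<partial>N2)"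
    by (rule ennreal_SUP_add[OF inc inc])
  finally show ?case using eq[OF mR(1)] eq[OF mR(2)] eq[OF mR(3)] by argo
qed


lemma int_transfer:
  fixes f :: "_ \<Rightarrow> real"
  assumes s1: "sets N1 = sets N" and s2: "sets N2 = sets N" and sR: "sets R = sets N"
    and em: "\<And>A. A \<in> sets N \<Longrightarrow> emeasure R A = (emeasure N1 A + emeasure N2 A) / 2"
    and f: "f \<in> borel_measurable N" and i1: "integrable N1 f" and i2: "integrable N2 f"
  shows "integrable R f" and "2 * integral\<^sup>L R f = integral\<^sup>L N1 f + integral\<^sup>L N2 f"
proof -
  have fR: "f \<in> borel_measurable R" using f meas_sets_eq[OF sR] by blast
  have P: "2 * (\<integral>\<^sup>+x. ennreal (f x) \<partial>R) = (\<integral>\<^sup>+x. ennreal (f x) \<partial>N1) + (\<integral>\<^sup>+x. ennreal (f x) \<partial>N2)"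
    using f by (intro nn_transfer[OF s1 s2 sR em]) auto
  have Q: "2 * (\<integral>\<^sup>+x. ennreal (- f x) \<partial>R) = (\<integral>\<^sup>+x. ennreal (- f x) \<partial>N1) + (\<integral>\<^sup>+x. ennreal (- f x) \<partial>N2)"
    using f by (intro nn_transfer[OF s1 s2 sR em]) auto
  have fin: "(\<integral>\<^sup>+x. ennreal (f x) \<partial>N1) < top" "(\<integral>\<^sup>+x. ennreal (- f x) \<partial>N1) < top"
     "(\<integral>\<^sup>+x. ennreal (f x) \<partial>N2) < top" "(\<integral>\<^sup>+x. ennreal (- f x) \<partial>N2) < top"
    using i1 i2 unfolding real_integrable_def by (auto simp: top.not_eq_extremum)
  have two: "\<And>a b::ennreal. 2 * a = b \<Longrightarrow> b < top \<Longrightarrow> a < top"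
    by (simp add: mult_2)
  have finR: "(\<integral>\<^sup>+x. ennreal (f x) \<partial>R) < top" "(\<integral>\<^sup>+x. ennreal (- f x) \<partial>R) < top"
    using two[OF P] two[OF Q] fin by auto
  show iR: "integrable R f"
    unfolding real_integrable_def using fR finR by auto
  have e1: "2 * enn2real (\<integral>\<^sup>+x. ennreal (f x) \<partial>R) = enn2real (\<integral>\<^sup>+x. ennreal (f x) \<partial>N1) + enn2real (\<integral>\<^sup>+x. ennreal (f x) \<partial>N2)"
    using arg_cong[OF P, of enn2real] fin by (simp add: enn2real_mult enn2real_plus)
  have e2: "2 * enn2real (\<integral>\<^sup>+x. ennreal (- f x) \<partial>R) = enn2real (\<integral>\<^sup>+x. ennreal (- f x) \<partial>N1) + enn2real (\<integral>\<^sup>+x. ennreal (- f x) \<partial>N2)"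
    using arg_cong[OF Q, of enn2real] fin by (simp add: enn2real_mult enn2real_plus)
  show "2 * integral\<^sup>L R f = integral\<^sup>L N1 f + integral\<^sup>L N2 f"
    unfolding real_lebesgue_integral_def[OF iR] real_lebesgue_integral_def[OF i1] real_lebesgue_integral_def[OF i2]
    using e1 e2 by (simp add: algebra_simps)
qed



lemma abs_mult_le_sq: "\<bar>(x::real) * y\<bar> \<le> x\<^sup>2 + y\<^sup>2"
proof -
  have "0 \<le> (\<bar>x\<bar> - \<bar>y\<bar>)\<^sup>2" by simp
  then have "2 * (\<bar>x\<bar> * \<bar>y\<bar>) \<le> x\<^sup>2 + y\<^sup>2" by (simp add: power2_diff)
  moreover have "0 \<le> \<bar>x\<bar> * \<bar>y\<bar>" by simp
  ultimately have "\<bar>x\<bar> * \<bar>y\<bar> \<le> x\<^sup>2 + y\<^sup>2" by linarith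
  then show ?thesis by (simp only: abs_mult)
qed

lemma prod_integrable:
  fixes a b :: "'a \<Rightarrow> real" and M :: "'a measure"
  assumes "a \<in> borel_measurable M" "b \<in> borel_measurable M"
    "integrable M (\<lambda>\<omega>. (a \<omega>)\<^sup>2)" "integrable M (\<lambda>\<omega>. (b \<omega>)\<^sup>2)"
  shows "integrable M (\<lambda>\<omega>. a \<omega> * b \<omega>)"
proof (rule Bochner_Integration.integrable_bound[where f="\<lambda>\<omega>. (a \<omega>)\<^sup>2 + (b \<omega>)\<^sup>2"])
  show "integrable M (\<lambda>\<omega>. (a \<omega>)\<^sup>2 + (b \<omega>)\<^sup>2)" using assms by auto
  show "(\<lambda>\<omega>. a \<omega> * b \<omega>) \<in> borel_measurable M" using assms by auto
  show "AE x in M. norm (a x * b x) \<le> norm ((a x)\<^sup>2 + (b x)\<^sup>2)"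
    using abs_mult_le_sq by auto
qed

lemma covar_expand:
  fixes a b :: "'a \<Rightarrow> real"
  assumes P: "prob_space M" and ia: "integrable M a" and ib: "integrable M b"
    and iab: "integrable M (\<lambda>\<omega>. a \<omega> * b \<omega>)"
  shows "covar M a b = (\<integral>\<omega>. a \<omega> * b \<omega> \<partial>M) - (\<integral>\<omega>. a \<omega> \<partial>M) * (\<integral>\<omega>. b \<omega> \<partial>M)"
proof -
  interpret prob_space M by fact
  define c where "c = (\<integral>\<omega>. a \<omega> \<partial>M)"
  define d where "d = (\<integral>\<omega>. b \<omega> \<partial>M)"
  have eq: "(\<lambda>\<omega>. (a \<omega> - c) * (b \<omega> - d)) = (\<lambda>\<omega>. (a \<omega> * b \<omega> - d * a \<omega>) - (c * b \<omega> - c * d))"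
    by (auto simp: algebra_simps)
  have "covar M a b = (\<integral>\<omega>. (a \<omega> * b \<omega> - d * a \<omega>) - (c * b \<omega> - c * d) \<partial>M)"
    unfolding covar_def c_def[symmetric] d_def[symmetric] eq ..
  also have "\<dots> = (\<integral>\<omega>. a \<omega> * b \<omega> - d * a \<omega> \<partial>M) - (\<integral>\<omega>. c * b \<omega> - c * d \<partial>M)"
  proof -
    have i1: "integrable M (\<lambda>\<omega>. a \<omega> * b \<omega> - d * a \<omega>)" using iab ia by auto
    have i2: "integrable M (\<lambda>\<omega>. c * b \<omega> - c * d)" using ib by auto
    show ?thesis by (rule Bochner_Integration.integral_diff[OF i1 i2])
  qed
  also have "\<dots> = ((\<integral>\<omega>. a \<omega> * b \<omega> \<partial>M) - d * c) - (c * d - c * d)"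
    using ia ib iab by (simp add: Bochner_Integration.integral_diff c_def d_def prob_space)
  finally show ?thesis by (simp add: c_def d_def)
qed

lemma covar_self_nz:
  assumes P: "prob_space M" and L: "in_L2 M a"
  shows "covar M a a \<noteq> 0"
proof
  interpret prob_space M by fact
  assume z: "covar M a a = 0"
  have am: "a \<in> borel_measurable M" and sq: "integrable M (\<lambda>\<omega>. (a \<omega>)\<^sup>2)"
    and nd: "\<not> (\<exists>c. AE \<omega> in M. a \<omega> = c)" using L by (auto simp: in_L2_def)
  have ia: "integrable M a" using square_integrable_imp_integrable[OF am sq] .
  define c where "c = (\<integral>\<omega>. a \<omega> \<partial>M)"
  have i2: "integrable M (\<lambda>\<omega>. (a \<omega> - c) * (a \<omega> - c))"
    using sq ia by (simp add: algebra_simps power2_eq_square)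
  have "AE \<omega> in M. (a \<omega> - c) * (a \<omega> - c) = 0"
    using z integral_nonneg_eq_0_iff_AE[OF i2] unfolding covar_def c_def[symmetric] by auto
  then have "AE \<omega> in M. a \<omega> = c" by auto
  then show False using nd by blast
qed




lemma rearr_prob_space:
  assumes P: "prob_space M" and X1: "X1 \<in> borel_measurable M" and X2: "X2 \<in> borel_measurable M"
  shows "prob_space (rearr_law M X1 X2)"
proof -
  interpret prob_space M by fact
  have p1: "prob_space (distr M (borel \<Otimes>\<^sub>M borel) (\<lambda>\<omega>. (X1 \<omega>, X2 \<omega>)))"
    using X1 X2 by (intro prob_space_distr) auto
  have p2: "prob_space (distr M (borel \<Otimes>\<^sub>M borel) (\<lambda>\<omega>. (X2 \<omega>, X1 \<omega>)))"
    using X1 X2 by (intro prob_space_distr) auto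
  have sp: "space (borel \<Otimes>\<^sub>M borel) \<in> sets (borel \<Otimes>\<^sub>M borel :: (real \<times> real) measure)" by simp
  show ?thesis
  proof (rule prob_spaceI)
    have e1: "emeasure (distr M (borel \<Otimes>\<^sub>M borel) (\<lambda>\<omega>. (X1 \<omega>, X2 \<omega>))) (space (borel \<Otimes>\<^sub>M borel)) = 1"
      using prob_space.emeasure_space_1[OF p1] by (simp only: space_distr)
    have e2: "emeasure (distr M (borel \<Otimes>\<^sub>M borel) (\<lambda>\<omega>. (X2 \<omega>, X1 \<omega>))) (space (borel \<Otimes>\<^sub>M borel)) = 1"
      using prob_space.emeasure_space_1[OF p2] by (simp only: space_distr)
    have "emeasure (rearr_law M X1 X2) (space (rearr_law M X1 X2)) = (1 + 1) / 2"
      unfolding rearr_law_facts(2)[OF X1 X2] rearr_law_facts(3)[OF X1 X2 sp] e1 e2 ..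
    also have "\<dots> = (1::ennreal)"
    proof -
      have "(1 + 1) / 2 = (2::ennreal) / 2" by simp
      also have "\<dots> = 1" by (rule ennreal_divide_self) auto
      finally show ?thesis .
    qed
    finally show "emeasure (rearr_law M X1 X2) (space (rearr_law M X1 X2)) = 1" .
  qed
qed


lemma dir2:
  fixes g :: "real \<Rightarrow> real"
  assumes P: "prob_space M" and X1: "X1 \<in> borel_measurable M" and X2: "X2 \<in> borel_measurable M"
    and deq: "distr M borel X1 = distr M borel X2"
    and ind: "prob_space.indep_var (rearr_law M X1 X2) borel fst borel snd"
    and g: "g \<in> borel_measurable borel"
    and sq1: "integrable M (\<lambda>\<omega>. (g (X1 \<omega>))\<^sup>2)" and sq2: "integrable M (\<lambda>\<omega>. (g (X2 \<omega>))\<^sup>2)"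
  shows "covar M (\<lambda>\<omega>. g (X1 \<omega>)) (\<lambda>\<omega>. g (X2 \<omega>)) = 0"
proof -
  interpret prob_space M by fact
  define \<nu> where "\<nu> = distr M (borel \<Otimes>\<^sub>M borel) (\<lambda>\<omega>. (X1 \<omega>, X2 \<omega>))"
  define \<nu>' where "\<nu>' = distr M (borel \<Otimes>\<^sub>M borel) (\<lambda>\<omega>. (X2 \<omega>, X1 \<omega>))"
  define \<rho> where "\<rho> = rearr_law M X1 X2"
  interpret R: prob_space \<rho> unfolding \<rho>_def using rearr_prob_space[OF P X1 X2] .
  have sR: "sets \<rho> = sets (borel \<Otimes>\<^sub>M borel)" unfolding \<rho>_def by (rule rearr_law_facts(1)[OF X1 X2])
  have em: "\<And>A. A \<in> sets (borel \<Otimes>\<^sub>M borel) \<Longrightarrow> emeasure \<rho> A = (emeasure \<nu> A + emeasure \<nu>' A) / 2"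
    unfolding \<rho>_def \<nu>_def \<nu>'_def by (rule rearr_law_facts(3)[OF X1 X2])
  have s1: "sets \<nu> = sets (borel \<Otimes>\<^sub>M borel)" unfolding \<nu>_def by simp
  have s2: "sets \<nu>' = sets (borel \<Otimes>\<^sub>M borel)" unfolding \<nu>'_def by simp
  have m12: "(\<lambda>\<omega>. (X1 \<omega>, X2 \<omega>)) \<in> measurable M (borel \<Otimes>\<^sub>M borel)" using X1 X2 by measurable
  have m21: "(\<lambda>\<omega>. (X2 \<omega>, X1 \<omega>)) \<in> measurable M (borel \<Otimes>\<^sub>M borel)" using X1 X2 by measurable
  define a where "a = (\<lambda>\<omega>. g (X1 \<omega>))"
  define b where "b = (\<lambda>\<omega>. g (X2 \<omega>))"
  have am: "a \<in> borel_measurable M" unfolding a_def using g X1 by measurable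
  have bm: "b \<in> borel_measurable M" unfolding b_def using g X2 by measurable
  have ia: "integrable M a" using square_integrable_imp_integrable[OF am] sq1 unfolding a_def by blast
  have ib: "integrable M b" using square_integrable_imp_integrable[OF bm] sq2 unfolding b_def by blast
  have iab: "integrable M (\<lambda>\<omega>. a \<omega> * b \<omega>)" using prod_integrable[OF am bm] sq1 sq2 unfolding a_def b_def by blast
  have iba: "integrable M (\<lambda>\<omega>. b \<omega> * a \<omega>)" using iab by (simp add: mult.commute)
  have Eab: "(\<integral>\<omega>. a \<omega> \<partial>M) = (\<integral>\<omega>. b \<omega> \<partial>M)"
  proof -
    have "(\<integral>\<omega>. a \<omega> \<partial>M) = integral\<^sup>L (distr M borel X1) g" unfolding a_def using X1 g by (simp add: integral_distr)
    also have "\<dots> = integral\<^sup>L (distr M borel X2) g" using deq by simp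
    also have "\<dots> = (\<integral>\<omega>. b \<omega> \<partial>M)" unfolding b_def using X2 g by (simp add: integral_distr)
    finally show ?thesis .
  qed
  define f1 where "f1 = (\<lambda>z::real\<times>real. g (fst z))"
  define f2 where "f2 = (\<lambda>z::real\<times>real. g (snd z))"
  define f12 where "f12 = (\<lambda>z::real\<times>real. g (fst z) * g (snd z))"
  have f1m: "f1 \<in> borel_measurable (borel \<Otimes>\<^sub>M borel)" unfolding f1_def using g by measurable
  have f2m: "f2 \<in> borel_measurable (borel \<Otimes>\<^sub>M borel)" unfolding f2_def using g by measurable
  have f12m: "f12 \<in> borel_measurable (borel \<Otimes>\<^sub>M borel)" unfolding f12_def using g by measurable
  have I1: "integrable \<nu> f1 = integrable M a" "integrable \<nu>' f1 = integrable M b"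
       "integrable \<nu> f2 = integrable M b" "integrable \<nu>' f2 = integrable M a"
       "integrable \<nu> f12 = integrable M (\<lambda>\<omega>. a \<omega> * b \<omega>)" "integrable \<nu>' f12 = integrable M (\<lambda>\<omega>. b \<omega> * a \<omega>)"
    unfolding \<nu>_def \<nu>'_def
    by (simp_all add: integrable_distr_eq[OF m12] integrable_distr_eq[OF m21] f1m f2m f12m)
       (simp_all add: f1_def f2_def f12_def a_def b_def)
  have J1: "integral\<^sup>L \<nu> f1 = integral\<^sup>L M a" "integral\<^sup>L \<nu>' f1 = integral\<^sup>L M b"
       "integral\<^sup>L \<nu> f2 = integral\<^sup>L M b" "integral\<^sup>L \<nu>' f2 = integral\<^sup>L M a"
       "integral\<^sup>L \<nu> f12 = (\<integral>\<omega>. a \<omega> * b \<omega> \<partial>M)" "integral\<^sup>L \<nu>' f12 = (\<integral>\<omega>. b \<omega> * a \<omega> \<partial>M)"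
    unfolding \<nu>_def \<nu>'_def
    by (simp_all add: integral_distr[OF m12] integral_distr[OF m21] f1m f2m f12m)
       (simp_all add: f1_def f2_def f12_def a_def b_def)
  have R1: "integrable \<rho> f1" "2 * integral\<^sup>L \<rho> f1 = integral\<^sup>L \<nu> f1 + integral\<^sup>L \<nu>' f1"
    using int_transfer[OF s1 s2 sR em f1m] I1 ia ib by auto
  have R2: "integrable \<rho> f2" "2 * integral\<^sup>L \<rho> f2 = integral\<^sup>L \<nu> f2 + integral\<^sup>L \<nu>' f2"
    using int_transfer[OF s1 s2 sR em f2m] I1 ia ib by auto
  have R12: "2 * integral\<^sup>L \<rho> f12 = integral\<^sup>L \<nu> f12 + integral\<^sup>L \<nu>' f12"
    using int_transfer[OF s1 s2 sR em f12m] I1 iab iba by auto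
  have ind2: "R.indep_var borel (g \<circ> fst) borel (g \<circ> snd)"
    using R.indep_var_compose[OF ind[folded \<rho>_def] g g] .
  have ind3: "R.indep_var borel f1 borel f2"
    using ind2 unfolding f1_def f2_def comp_def .
  have prod: "integral\<^sup>L \<rho> (\<lambda>z. f1 z * f2 z) = integral\<^sup>L \<rho> f1 * integral\<^sup>L \<rho> f2"
    by (rule R.indep_var_lebesgue_integral[OF ind3 R1(1) R2(1)])
  have "(\<lambda>z. f1 z * f2 z) = f12" unfolding f1_def f2_def f12_def ..
  then have prod': "integral\<^sup>L \<rho> f12 = integral\<^sup>L \<rho> f1 * integral\<^sup>L \<rho> f2" using prod by simp
  have "(\<integral>\<omega>. b \<omega> * a \<omega> \<partial>M) = (\<integral>\<omega>. a \<omega> * b \<omega> \<partial>M)" by (simp add: mult.commute)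
  then have Eprod: "(\<integral>\<omega>. a \<omega> * b \<omega> \<partial>M) = integral\<^sup>L M a * integral\<^sup>L M b"
    using prod' R1(2) R2(2) R12 J1 Eab by simp
  show ?thesis
    using covar_expand[OF P ia ib iab] Eprod unfolding a_def b_def by simp
qed



lemma ae_transfer:
  fixes g :: "real \<Rightarrow> real"
  assumes X1: "X1 \<in> borel_measurable M" and X2: "X2 \<in> borel_measurable M"
    and deq: "distr M borel X1 = distr M borel X2" and g: "g \<in> borel_measurable borel"
  shows "(AE \<omega> in M. g (X1 \<omega>) = c) \<longleftrightarrow> (AE \<omega> in M. g (X2 \<omega>) = c)"
proof -
  have st: "{x \<in> space borel. g x = c} \<in> sets borel" using g by measurable
  show ?thesis using AE_distr_iff[OF X1 st] AE_distr_iff[OF X2 st] deq by metis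
qed

lemma in_L2_transfer:
  fixes g :: "real \<Rightarrow> real"
  assumes X1: "X1 \<in> borel_measurable M" and X2: "X2 \<in> borel_measurable M"
    and deq: "distr M borel X1 = distr M borel X2" and g: "g \<in> borel_measurable borel"
  shows "in_L2 M (\<lambda>\<omega>. g (X1 \<omega>)) \<longleftrightarrow> in_L2 M (\<lambda>\<omega>. g (X2 \<omega>))"
proof -
  have gs: "(\<lambda>x. (g x)\<^sup>2) \<in> borel_measurable borel" using g by measurable
  have i: "integrable M (\<lambda>\<omega>. (g (X1 \<omega>))\<^sup>2) \<longleftrightarrow> integrable M (\<lambda>\<omega>. (g (X2 \<omega>))\<^sup>2)"
    using integrable_distr_eq[OF X1 gs] integrable_distr_eq[OF X2 gs] deq by simp
  have ae: "(AE \<omega> in M. g (X1 \<omega>) = c) \<longleftrightarrow> (AE \<omega> in M. g (X2 \<omega>) = c)" for c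
  proof -
    have st: "{x \<in> space borel. g x = c} \<in> sets borel" using g by measurable
    show ?thesis using AE_distr_iff[OF X1 st] AE_distr_iff[OF X2 st] deq by metis
  qed
  have m1: "(\<lambda>\<omega>. g (X1 \<omega>)) \<in> borel_measurable M" using g X1 by measurable
  have m2: "(\<lambda>\<omega>. g (X2 \<omega>)) \<in> borel_measurable M" using g X2 by measurable
  show ?thesis unfolding in_L2_def using i ae m1 m2 by auto
qed

lemma K:
  fixes g :: "real \<Rightarrow> real"
  assumes P: "prob_space M" and X1: "X1 \<in> borel_measurable M" and X2: "X2 \<in> borel_measurable M"
    and deq: "distr M borel X1 = distr M borel X2" and ic: "IC0 M X1 X2"
    and g: "g \<in> borel_measurable borel" and bnd: "\<And>x. \<bar>g x\<bar> \<le> C"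
  shows "(\<integral>\<omega>. g (X1 \<omega>) * g (X2 \<omega>) \<partial>M) = (\<integral>\<omega>. g (X1 \<omega>) \<partial>M) * (\<integral>\<omega>. g (X1 \<omega>) \<partial>M)"
proof -
  interpret prob_space M by fact
  define a where "a = (\<lambda>\<omega>. g (X1 \<omega>))"
  define b where "b = (\<lambda>\<omega>. g (X2 \<omega>))"
  have am: "a \<in> borel_measurable M" unfolding a_def using g X1 by measurable
  have bm: "b \<in> borel_measurable M" unfolding b_def using g X2 by measurable
  have ia: "integrable M a" using bnd am by (intro integrable_const_bound[where B=C]) (auto simp: a_def)
  have ib: "integrable M b" using bnd bm by (intro integrable_const_bound[where B=C]) (auto simp: b_def)
  have abm: "(\<lambda>\<omega>. a \<omega> * b \<omega>) \<in> borel_measurable M" using am bm by measurable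
  have iab: "integrable M (\<lambda>\<omega>. a \<omega> * b \<omega>)"
  proof (rule integrable_const_bound[where B="C * C"])
    show "AE x in M. norm (a x * b x) \<le> C * C"
      using bnd by (auto simp: a_def b_def abs_mult intro!: mult_mono order_trans[OF abs_ge_zero bnd])
  qed (rule abm)
  have Eab: "(\<integral>\<omega>. a \<omega> \<partial>M) = (\<integral>\<omega>. b \<omega> \<partial>M)"
  proof -
    have "(\<integral>\<omega>. a \<omega> \<partial>M) = integral\<^sup>L (distr M borel X1) g" unfolding a_def using X1 g by (simp add: integral_distr)
    also have "\<dots> = integral\<^sup>L (distr M borel X2) g" using deq by simp
    also have "\<dots> = (\<integral>\<omega>. b \<omega> \<partial>M)" unfolding b_def using X2 g by (simp add: integral_distr)
    finally show ?thesis .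
  qed
  show ?thesis
  proof (cases "in_L2 M a")
    case True
    then have Lb: "in_L2 M b" using in_L2_transfer[OF X1 X2 deq g] unfolding a_def b_def by simp
    have "corr M (g \<circ> X1) (g \<circ> X2) = 0"
      using ic g True Lb unfolding IC0_def a_def b_def comp_def by auto
    then have c0: "corr M a b = 0" unfolding a_def b_def comp_def .
    have "covar M a a \<noteq> 0" "covar M b b \<noteq> 0"
      using covar_self_nz[OF P True] covar_self_nz[OF P Lb] by auto
    moreover have "0 \<le> covar M a a" "0 \<le> covar M b b"
      unfolding covar_def by (auto intro!: integral_nonneg_AE simp: zero_le_mult_iff)
    ultimately have "sqrt (covar M a a) * sqrt (covar M b b) \<noteq> 0" by simp
    then have "covar M a b = 0" using c0 unfolding corr_def by simp
    then show ?thesis using covar_expand[OF P ia ib iab] Eab unfolding a_def b_def by simp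
  next
    case False
    have bd: "norm ((a \<omega>)\<^sup>2) \<le> C\<^sup>2" for \<omega>
    proof -
      have "\<bar>a \<omega>\<bar> \<le> C" by (simp add: a_def bnd)
      then have "\<bar>a \<omega>\<bar>\<^sup>2 \<le> C\<^sup>2" by (intro power_mono) auto
      then show ?thesis by simp
    qed
    have sqm: "(\<lambda>\<omega>. (a \<omega>)\<^sup>2) \<in> borel_measurable M" using am by measurable
    have sq: "integrable M (\<lambda>\<omega>. (a \<omega>)\<^sup>2)"
      using bd sqm by (intro integrable_const_bound[where B="C\<^sup>2"]) auto
    then obtain c where c: "AE \<omega> in M. a \<omega> = c" using False am unfolding in_L2_def by auto
    have c': "AE \<omega> in M. b \<omega> = c" using ae_transfer[OF X1 X2 deq g, of c] c unfolding a_def b_def by simp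
    have E1: "(\<integral>\<omega>. a \<omega> \<partial>M) = c" using integral_cong_AE[OF am _ c] by (simp add: prob_space)
    have E2: "(\<integral>\<omega>. a \<omega> * b \<omega> \<partial>M) = c * c"
    proof -
      have ae: "AE \<omega> in M. a \<omega> * b \<omega> = c * c" using c c' by eventually_elim auto
      show ?thesis using integral_cong_AE[OF abm _ ae] by (simp add: prob_space)
    qed
    show ?thesis using E1 E2 unfolding a_def b_def by simp
  qed
qed


lemma rect:
  fixes X1 X2 :: "'a \<Rightarrow> real"
  assumes P: "prob_space M" and X1: "X1 \<in> borel_measurable M" and X2: "X2 \<in> borel_measurable M"
    and deq: "distr M borel X1 = distr M borel X2" and ic: "IC0 M X1 X2"
    and A: "A \<in> sets borel" and B: "B \<in> sets borel"
  shows "measure M {\<omega>\<in>space M. X1 \<omega> \<in> A \<and> X2 \<omega> \<in> B} + measure M {\<omega>\<in>space M. X1 \<omega> \<in> B \<and> X2 \<omega> \<in> A}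
       = 2 * measure M {\<omega>\<in>space M. X1 \<omega> \<in> A} * measure M {\<omega>\<in>space M. X1 \<omega> \<in> B}"
proof -
  interpret prob_space M by fact
  define E where "E S T = {\<omega>\<in>space M. X1 \<omega> \<in> S \<and> X2 \<omega> \<in> T}" for S T
  define F where "F S = {\<omega>\<in>space M. X1 \<omega> \<in> S}" for S
  have Em: "E S T \<in> sets M" if "S \<in> sets borel" "T \<in> sets borel" for S T
    unfolding E_def using X1 X2 that by measurable
  have Fm: "F S \<in> sets M" if "S \<in> sets borel" for S
    unfolding F_def using X1 that by measurable
  have iE: "integrable M (indicator (E S T) :: _ \<Rightarrow> real)" if "S \<in> sets borel" "T \<in> sets borel" for S T
    using Em[OF that] by (intro integrable_real_indicator) (auto simp: less_top[symmetric])
  have iF: "integrable M (indicator (F S) :: _ \<Rightarrow> real)" if "S \<in> sets borel" for S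
    using Fm[OF that] by (intro integrable_real_indicator) (auto simp: less_top[symmetric])
  have intE: "(\<integral>\<omega>. indicator (E S T) \<omega> \<partial>M) = measure M (E S T)" if "S \<in> sets borel" "T \<in> sets borel" for S T
    using Em[OF that] by (simp add: Int_absorb2 sets.sets_into_space)
  have intF: "(\<integral>\<omega>. indicator (F S) \<omega> \<partial>M) = measure M (F S)" if "S \<in> sets borel" for S
    using Fm[OF that] by (simp add: Int_absorb2 sets.sets_into_space)
  have Ka: "(\<integral>\<omega>. (indicator A (X1 \<omega>) :: real) * indicator A (X2 \<omega>) \<partial>M) =
      (\<integral>\<omega>. indicator A (X1 \<omega>) \<partial>M) * (\<integral>\<omega>. indicator A (X1 \<omega>) \<partial>M)"
  proof -
    have m: "(indicator A :: real \<Rightarrow> real) \<in> borel_measurable borel" using A by measurable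
    have b: "\<bar>(indicator A :: real \<Rightarrow> real) x\<bar> \<le> 1" for x by (auto simp: indicator_def)
    show ?thesis by (rule K[OF P X1 X2 deq ic m b])
  qed
  have Kb: "(\<integral>\<omega>. (indicator B (X1 \<omega>) :: real) * indicator B (X2 \<omega>) \<partial>M) =
      (\<integral>\<omega>. indicator B (X1 \<omega>) \<partial>M) * (\<integral>\<omega>. indicator B (X1 \<omega>) \<partial>M)"
  proof -
    have m: "(indicator B :: real \<Rightarrow> real) \<in> borel_measurable borel" using B by measurable
    have b: "\<bar>(indicator B :: real \<Rightarrow> real) x\<bar> \<le> 1" for x by (auto simp: indicator_def)
    show ?thesis by (rule K[OF P X1 X2 deq ic m b])
  qed
  define h :: "real \<Rightarrow> real" where "h x = indicator A x + indicator B x" for x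
  have hm: "h \<in> borel_measurable borel" unfolding h_def using A B by measurable
  have hb: "\<bar>h x\<bar> \<le> 2" for x unfolding h_def by (auto simp: indicator_def)
  have Kh: "(\<integral>\<omega>. h (X1 \<omega>) * h (X2 \<omega>) \<partial>M) = (\<integral>\<omega>. h (X1 \<omega>) \<partial>M) * (\<integral>\<omega>. h (X1 \<omega>) \<partial>M)"
    by (rule K[OF P X1 X2 deq ic hm hb])
  have c1: "(\<integral>\<omega>. (indicator S (X1 \<omega>) :: real) * indicator T (X2 \<omega>) \<partial>M) = measure M (E S T)"
    if "S \<in> sets borel" "T \<in> sets borel" for S T
  proof -
    have "(\<integral>\<omega>. (indicator S (X1 \<omega>) :: real) * indicator T (X2 \<omega>) \<partial>M) = (\<integral>\<omega>. indicator (E S T) \<omega> \<partial>M)"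
      by (rule Bochner_Integration.integral_cong) (auto simp: E_def indicator_def)
    then show ?thesis using intE[OF that] by simp
  qed
  have c2: "(\<integral>\<omega>. (indicator S (X1 \<omega>) :: real) \<partial>M) = measure M (F S)" if "S \<in> sets borel" for S
  proof -
    have "(\<integral>\<omega>. (indicator S (X1 \<omega>) :: real) \<partial>M) = (\<integral>\<omega>. indicator (F S) \<omega> \<partial>M)"
      by (rule Bochner_Integration.integral_cong) (auto simp: F_def indicator_def)
    then show ?thesis using intF[OF that] by simp
  qed
  have "(\<integral>\<omega>. h (X1 \<omega>) * h (X2 \<omega>) \<partial>M) =
     (\<integral>\<omega>. ((indicator (E A A) \<omega> + indicator (E A B) \<omega>) + indicator (E B A) \<omega>) + indicator (E B B) \<omega> \<partial>M)"
    by (rule Bochner_Integration.integral_cong) (auto simp: E_def indicator_def h_def)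
  also have "\<dots> = measure M (E A A) + measure M (E A B) + measure M (E B A) + measure M (E B B)"
    using iE A B intE
    by (simp add: Bochner_Integration.integral_add)
  finally have L: "(\<integral>\<omega>. h (X1 \<omega>) * h (X2 \<omega>) \<partial>M) = measure M (E A A) + measure M (E A B) + measure M (E B A) + measure M (E B B)" .
  have "(\<integral>\<omega>. h (X1 \<omega>) \<partial>M) = (\<integral>\<omega>. indicator (F A) \<omega> + indicator (F B) \<omega> \<partial>M)"
    by (rule Bochner_Integration.integral_cong) (auto simp: F_def indicator_def h_def)
  also have "\<dots> = measure M (F A) + measure M (F B)"
    using iF A B intF by (simp add: Bochner_Integration.integral_add)
  finally have R: "(\<integral>\<omega>. h (X1 \<omega>) \<partial>M) = measure M (F A) + measure M (F B)" .
  have "measure M (E A A) = measure M (F A) * measure M (F A)" using Ka c1 c2 A by simp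
  moreover have "measure M (E B B) = measure M (F B) * measure M (F B)" using Kb c1 c2 B by simp
  ultimately have "measure M (E A B) + measure M (E B A) = 2 * measure M (F A) * measure M (F B)"
    using Kh L R by (simp add: algebra_simps)
  then show ?thesis unfolding E_def F_def .
qed




lemma half_double_ennreal: "(x + x) / 2 = (x::ennreal)"
proof -
  have "x + x = 2 * x" by (simp add: mult_2)
  then have "(x + x) / 2 = 2 * (x / 2)" by (simp add: ennreal_times_divide)
  then show ?thesis by (simp add: two_half_ennreal)
qed

theorem proposition2:
  fixes M :: "'a measure" and X1 X2 :: "'a \<Rightarrow> real"
  assumes "prob_space M"
    and "in_L2 M X1" and "in_L2 M X2"
    and "distr M borel X1 = distr M borel X2"
  shows "IC0 M X1 X2 \<longleftrightarrow>
         prob_space.indep_var (rearr_law M X1 X2) borel fst borel snd"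
proof -
  note P = assms(1)
  note deq = assms(4)
  interpret prob_space M by fact
  have X1: "X1 \<in> borel_measurable M" using assms(2) by (simp add: in_L2_def)
  have X2: "X2 \<in> borel_measurable M" using assms(3) by (simp add: in_L2_def)
  define \<nu> where "\<nu> = distr M (borel \<Otimes>\<^sub>M borel) (\<lambda>\<omega>. (X1 \<omega>, X2 \<omega>))"
  define \<nu>' where "\<nu>' = distr M (borel \<Otimes>\<^sub>M borel) (\<lambda>\<omega>. (X2 \<omega>, X1 \<omega>))"
  define \<rho> where "\<rho> = rearr_law M X1 X2"
  interpret R: prob_space \<rho> unfolding \<rho>_def using rearr_prob_space[OF P X1 X2] .
  have sR: "sets \<rho> = sets (borel \<Otimes>\<^sub>M borel)" unfolding \<rho>_def by (rule rearr_law_facts(1)[OF X1 X2])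
  have spR: "space \<rho> = space (borel \<Otimes>\<^sub>M borel)" unfolding \<rho>_def by (rule rearr_law_facts(2)[OF X1 X2])
  have em: "\<And>A. A \<in> sets (borel \<Otimes>\<^sub>M borel) \<Longrightarrow> emeasure \<rho> A = (emeasure \<nu> A + emeasure \<nu>' A) / 2"
    unfolding \<rho>_def \<nu>_def \<nu>'_def by (rule rearr_law_facts(3)[OF X1 X2])
  have m12: "(\<lambda>\<omega>. (X1 \<omega>, X2 \<omega>)) \<in> measurable M (borel \<Otimes>\<^sub>M borel)" using X1 X2 by measurable
  have m21: "(\<lambda>\<omega>. (X2 \<omega>, X1 \<omega>)) \<in> measurable M (borel \<Otimes>\<^sub>M borel)" using X1 X2 by measurable
  have "IC0 M X1 X2 \<longleftrightarrow> R.indep_var borel fst borel snd"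
  proof
    assume ic: "IC0 M X1 X2"
    define \<mu> where "\<mu> = distr M borel X1"
    have s\<mu>: "sets \<mu> = sets borel" unfolding \<mu>_def by simp
    have em\<mu>: "emeasure \<mu> A = ennreal (measure M {\<omega>\<in>space M. X1 \<omega> \<in> A})" if "A \<in> sets borel" for A
    proof -
      have "emeasure \<mu> A = emeasure M (X1 -` A \<inter> space M)" unfolding \<mu>_def using X1 that by (simp add: emeasure_distr)
      also have "X1 -` A \<inter> space M = {\<omega>\<in>space M. X1 \<omega> \<in> A}" by auto
      finally show ?thesis by (simp add: emeasure_eq_measure)
    qed
    have em\<mu>2: "emeasure \<mu> A = emeasure M (X2 -` A \<inter> space M)" if "A \<in> sets borel" for A
      unfolding \<mu>_def deq using X2 that by (simp add: emeasure_distr)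
    have marg1: "distr \<rho> borel fst = \<mu>"
    proof (rule measure_eqI)
      show "sets (distr \<rho> borel fst) = sets \<mu>" using s\<mu> by simp
      fix A assume "A \<in> sets (distr \<rho> borel fst)"
      then have A: "A \<in> sets borel" by simp
      have fm: "fst \<in> measurable \<rho> borel" using meas_sets_eq[OF sR] measurable_fst by blast
      have AU: "A \<times> UNIV \<in> sets (borel \<Otimes>\<^sub>M borel)" using A by simp
      have "emeasure (distr \<rho> borel fst) A = emeasure \<rho> (fst -` A \<inter> space \<rho>)"
        by (rule emeasure_distr[OF fm A])
      also have "fst -` A \<inter> space \<rho> = A \<times> UNIV" unfolding spR by (auto simp: space_pair_measure)
      also have "emeasure \<rho> (A \<times> UNIV) = (emeasure \<nu> (A \<times> UNIV) + emeasure \<nu>' (A \<times> UNIV)) / 2"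
        using em[OF AU] .
      also have "emeasure \<nu> (A \<times> UNIV) = emeasure \<mu> A"
      proof -
        have "emeasure \<nu> (A \<times> UNIV) = emeasure M ((\<lambda>\<omega>. (X1 \<omega>, X2 \<omega>)) -` (A \<times> UNIV) \<inter> space M)"
          unfolding \<nu>_def by (rule emeasure_distr[OF m12 AU])
        also have "(\<lambda>\<omega>. (X1 \<omega>, X2 \<omega>)) -` (A \<times> UNIV) \<inter> space M = {\<omega>\<in>space M. X1 \<omega> \<in> A}" by auto
        finally show ?thesis using em\<mu>[OF A] by (simp add: emeasure_eq_measure)
      qed
      also have "emeasure \<nu>' (A \<times> UNIV) = emeasure \<mu> A"
      proof -
        have "emeasure \<nu>' (A \<times> UNIV) = emeasure M ((\<lambda>\<omega>. (X2 \<omega>, X1 \<omega>)) -` (A \<times> UNIV) \<inter> space M)"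
          unfolding \<nu>'_def by (rule emeasure_distr[OF m21 AU])
        also have "(\<lambda>\<omega>. (X2 \<omega>, X1 \<omega>)) -` (A \<times> UNIV) \<inter> space M = X2 -` A \<inter> space M" by auto
        finally show ?thesis using em\<mu>2[OF A] by simp
      qed
      finally show "emeasure (distr \<rho> borel fst) A = emeasure \<mu> A" by (simp add: half_double_ennreal)
    qed
    have marg2: "distr \<rho> borel snd = \<mu>"
    proof (rule measure_eqI)
      show "sets (distr \<rho> borel snd) = sets \<mu>" using s\<mu> by simp
      fix A assume "A \<in> sets (distr \<rho> borel snd)"
      then have A: "A \<in> sets borel" by simp
      have fm: "snd \<in> measurable \<rho> borel" using meas_sets_eq[OF sR] measurable_snd by blast
      have AU: "UNIV \<times> A \<in> sets (borel \<Otimes>\<^sub>M borel)" using A by simp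
      have "emeasure (distr \<rho> borel snd) A = emeasure \<rho> (snd -` A \<inter> space \<rho>)"
        by (rule emeasure_distr[OF fm A])
      also have "snd -` A \<inter> space \<rho> = UNIV \<times> A" unfolding spR by (auto simp: space_pair_measure)
      also have "emeasure \<rho> (UNIV \<times> A) = (emeasure \<nu> (UNIV \<times> A) + emeasure \<nu>' (UNIV \<times> A)) / 2"
        using em[OF AU] .
      also have "emeasure \<nu>' (UNIV \<times> A) = emeasure \<mu> A"
      proof -
        have "emeasure \<nu>' (UNIV \<times> A) = emeasure M ((\<lambda>\<omega>. (X2 \<omega>, X1 \<omega>)) -` (UNIV \<times> A) \<inter> space M)"
          unfolding \<nu>'_def by (rule emeasure_distr[OF m21 AU])
        also have "(\<lambda>\<omega>. (X2 \<omega>, X1 \<omega>)) -` (UNIV \<times> A) \<inter> space M = {\<omega>\<in>space M. X1 \<omega> \<in> A}" by auto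
        finally show ?thesis using em\<mu>[OF A] by (simp add: emeasure_eq_measure)
      qed
      also have "emeasure \<nu> (UNIV \<times> A) = emeasure \<mu> A"
      proof -
        have "emeasure \<nu> (UNIV \<times> A) = emeasure M ((\<lambda>\<omega>. (X1 \<omega>, X2 \<omega>)) -` (UNIV \<times> A) \<inter> space M)"
          unfolding \<nu>_def by (rule emeasure_distr[OF m12 AU])
        also have "(\<lambda>\<omega>. (X1 \<omega>, X2 \<omega>)) -` (UNIV \<times> A) \<inter> space M = X2 -` A \<inter> space M" by auto
        finally show ?thesis using em\<mu>2[OF A] by simp
      qed
      finally show "emeasure (distr \<rho> borel snd) A = emeasure \<mu> A" by (simp add: half_double_ennreal)
    qed
    have prodeq: "\<mu> \<Otimes>\<^sub>M \<mu> = \<rho>"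
    proof (rule pair_measure_eqI)
      show "sigma_finite_measure \<mu>" unfolding \<mu>_def
        using X1 by (intro prob_space_imp_sigma_finite prob_space_distr) auto
      then show "sigma_finite_measure \<mu>" .
      show "sets (\<mu> \<Otimes>\<^sub>M \<mu>) = sets \<rho>" unfolding sR by (intro sets_pair_measure_cong s\<mu>)
      fix A B assume A: "A \<in> sets \<mu>" and B: "B \<in> sets \<mu>"
      then have A: "A \<in> sets borel" and B: "B \<in> sets borel" using s\<mu> by auto
      have AB: "A \<times> B \<in> sets (borel \<Otimes>\<^sub>M borel)" using A B by simp
      define pAB where "pAB = measure M {\<omega>\<in>space M. X1 \<omega> \<in> A \<and> X2 \<omega> \<in> B}"
      define pBA where "pBA = measure M {\<omega>\<in>space M. X1 \<omega> \<in> B \<and> X2 \<omega> \<in> A}"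
      define mA where "mA = measure M {\<omega>\<in>space M. X1 \<omega> \<in> A}"
      define mB where "mB = measure M {\<omega>\<in>space M. X1 \<omega> \<in> B}"
      have key: "pAB + pBA = 2 * mA * mB"
        unfolding pAB_def pBA_def mA_def mB_def by (rule rect[OF P X1 X2 deq ic A B])
      have e1: "emeasure \<nu> (A \<times> B) = ennreal pAB"
      proof -
        have "emeasure \<nu> (A \<times> B) = emeasure M ((\<lambda>\<omega>. (X1 \<omega>, X2 \<omega>)) -` (A \<times> B) \<inter> space M)"
          unfolding \<nu>_def by (rule emeasure_distr[OF m12 AB])
        also have "(\<lambda>\<omega>. (X1 \<omega>, X2 \<omega>)) -` (A \<times> B) \<inter> space M = {\<omega>\<in>space M. X1 \<omega> \<in> A \<and> X2 \<omega> \<in> B}" by auto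
        finally show ?thesis unfolding pAB_def by (simp add: emeasure_eq_measure)
      qed
      have e2: "emeasure \<nu>' (A \<times> B) = ennreal pBA"
      proof -
        have "emeasure \<nu>' (A \<times> B) = emeasure M ((\<lambda>\<omega>. (X2 \<omega>, X1 \<omega>)) -` (A \<times> B) \<inter> space M)"
          unfolding \<nu>'_def by (rule emeasure_distr[OF m21 AB])
        also have "(\<lambda>\<omega>. (X2 \<omega>, X1 \<omega>)) -` (A \<times> B) \<inter> space M = {\<omega>\<in>space M. X1 \<omega> \<in> B \<and> X2 \<omega> \<in> A}" by auto
        finally show ?thesis unfolding pBA_def by (simp add: emeasure_eq_measure)
      qed
      have "emeasure \<rho> (A \<times> B) = (ennreal pAB + ennreal pBA) / 2" using em[OF AB] e1 e2 by simp
      also have "\<dots> = ennreal ((pAB + pBA) / 2)"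
        by (simp add: pAB_def pBA_def ennreal_plus[symmetric] ennreal_divide_numeral del: ennreal_plus)
      also have "(pAB + pBA) / 2 = mA * mB" using key by simp
      also have "ennreal (mA * mB) = emeasure \<mu> A * emeasure \<mu> B"
        using em\<mu>[OF A] em\<mu>[OF B] by (simp add: mA_def mB_def ennreal_mult)
      finally show "emeasure \<mu> A * emeasure \<mu> B = emeasure \<rho> (A \<times> B)" by simp
    qed
    have "distr \<rho> (borel \<Otimes>\<^sub>M borel) (\<lambda>x. (fst x, snd x)) = \<rho>"
      using distr_id2[of "borel \<Otimes>\<^sub>M borel" \<rho>] sR by simp
    then show "R.indep_var borel fst borel snd"
      unfolding R.indep_var_distribution_eq marg1 marg2 prodeq
      using meas_sets_eq[OF sR] measurable_fst measurable_snd by auto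
  next
    assume ind: "R.indep_var borel fst borel snd"
    have ind': "prob_space.indep_var (rearr_law M X1 X2) borel fst borel snd"
      using ind unfolding \<rho>_def .
    show "IC0 M X1 X2"
      unfolding IC0_def
    proof (intro conjI allI impI)
      have "covar M (\<lambda>\<omega>. X1 \<omega>) (\<lambda>\<omega>. X2 \<omega>) = 0"
        using dir2[OF P X1 X2 deq ind', of "\<lambda>x. x"] assms(2,3) by (simp add: in_L2_def)
      then show "corr M X1 X2 = 0" by (simp add: corr_def)
    next
      fix g :: "real \<Rightarrow> real"
      assume g: "g \<in> borel_measurable borel" and L1: "in_L2 M (g \<circ> X1)" and L2: "in_L2 M (g \<circ> X2)"
      have "covar M (\<lambda>\<omega>. g (X1 \<omega>)) (\<lambda>\<omega>. g (X2 \<omega>)) = 0"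
        using dir2[OF P X1 X2 deq ind' g] L1 L2 by (simp add: in_L2_def comp_def)
      then show "corr M (g \<circ> X1) (g \<circ> X2) = 0" by (simp add: corr_def comp_def)
    qed
  qed
  then show ?thesis unfolding \<rho>_def .
qed


end
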